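(* Let $T:\mathbb{Z}\to\mathbb{Z}$ be defined by $T(n)=n/2$ if $n$ is even and $T(n)=(3n+1)/2$ if $n$ is odd. Let $[2]_3$ denote the set of integers congruent to $2 \pmod 3$, and define $F:[2]_3\to[2]_3$ by $F(n)=T(n)$ if $n\equiv 5\pmod 6$ and $F(n)=T(T(n))$ if $n\equiv 2\pmod 6$. Then the $3x+1$ conjecture holds if and only if for every positive integer $n\in[2]_3$ the $F$-trajectory of $n$ eventually reaches $2$ (i.e., $F^k(n)=2$ for some $k\ge 0$).
   Context: The $3x+1$ conjecture is the statement: for every positive integer $n$, the $T$-trajectory $(T^k(n))_{k\ge0}$ eventually reaches the cycle $(2,1)$, i.e., $T^k(n)=1$ for some $k\ge 0$. Iterates are defined by $f^0(n)=n$, $f^{k+1}(n)=f(f^k(n))$. *)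

theory Defs
  imports Main
begin

definition T :: "int \<Rightarrow> int" where
  "T n = (if even n then n div 2 else (3 * n + 1) div 2)"

text \<open>F is only meaningful on integers congruent to 2 mod 3; outside that set
  we (arbitrarily) let it be the identity. Only its values on [2]_3 matter.\<close>
definition F :: "int \<Rightarrow> int" where
  "F n = (if n mod 6 = 5 then T n else if n mod 6 = 2 then T (T n) else n)"

end

theory Submission
  imports Defs
begin

lemma F_T: "\<exists>j. F m = (T^^j) m"
proof -
  have "F m = (T^^1) m \<or> F m = (T^^2) m \<or> F m = (T^^0) m"
    by (simp add: F_def numeral_2_eq_2)
  then show ?thesis by blast
qed

lemma FT_iter: "\<exists>K. (F^^k) m = (T^^K) m"
proof (induction k)
  case 0
  then show ?case by (metis funpow_0)
next
  case (Suc k)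
  then obtain K where K: "(F^^k) m = (T^^K) m" by blast
  obtain j where j: "F ((T^^K) m) = (T^^j) ((T^^K) m)" using F_T by blast
  have "(F^^Suc k) m = (T^^(j+K)) m" using K j by (simp add: funpow_add)
  then show ?case by blast
qed

lemma T5: "m mod 6 = 5 \<Longrightarrow> T m mod 3 = 2"
proof -
  assume "m mod 6 = 5"
  then obtain a where "m = 6*a+5" by (metis mult.commute mod_mult_div_eq add.commute)
  then show ?thesis unfolding T_def by (simp; presburger)
qed

lemma T2: "m mod 6 = 2 \<Longrightarrow> T m mod 3 = 1"
proof -
  assume "m mod 6 = 2"
  then obtain a where "m = 6*a+2" by (metis mult.commute mod_mult_div_eq add.commute)
  then have "T m = 3*a+1" unfolding T_def by simp
  then show ?thesis by simp
qed

lemma TT2: "m mod 6 = 2 \<Longrightarrow> T (T m) mod 3 = 2"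
proof -
  assume "m mod 6 = 2"
  then obtain a where a: "m = 6*a+2" by (metis mult.commute mod_mult_div_eq add.commute)
  then have Tm: "T m = 3*a+1" unfolding T_def by simp
  show ?thesis
  proof (cases "even a")
    case True
    then obtain b where "a = 2*b" by blast
    then have "T (T m) = 9*b+2" using Tm unfolding T_def by simp
    then show ?thesis by presburger
  next
    case False
    then obtain b where "a = 2*b+1" using oddE by blast
    then have "T (T m) = 3*b+2" using Tm unfolding T_def by simp
    then show ?thesis by simp
  qed
qed

lemma fwd: "m mod 3 = 2 \<Longrightarrow> (T^^K) m = 2 \<Longrightarrow> \<exists>k. (F^^k) m = 2"
proof (induction K arbitrary: m rule: less_induct)
  case (less K)
  show ?case
  proof (cases "m = 2")
    case True
    then show ?thesis by (metis funpow_0)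
  next
    case ne: False
    then have K0: "K \<noteq> 0" using less.prems by (cases K) auto
    have "m mod 6 = 5 \<or> m mod 6 = 2" using less.prems(1) by presburger
    then show ?thesis
    proof
      assume h: "m mod 6 = 5"
      have Fm: "F m = T m" using h by (simp add: F_def)
      have "(T^^(K-1)) (T m) = 2" using less.prems(2) K0
        by (metis Suc_pred' gr0I funpow_Suc_right comp_apply)
      then obtain k where "(F^^k) (F m) = 2"
        using less.IH[of "K-1" "F m"] K0 T5[OF h] Fm by auto
      then have "(F^^Suc k) m = 2" by (simp add: funpow_Suc_right del: funpow.simps)
      then show ?thesis by blast
    next
      assume h: "m mod 6 = 2"
      have Fm: "F m = T (T m)" using h by (simp add: F_def)
      have K1: "K \<noteq> 1" using less.prems(2) T2[OF h] by auto
      have "(T^^K) m = (T^^(K-2)) (T (T m))"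
      proof -
        have "K = (K-2) + 2" using K0 K1 by arith
        then have "(T^^K) m = (T^^(K-2)) ((T^^2) m)" by (metis funpow_add comp_apply)
        then show ?thesis by (simp add: numeral_2_eq_2)
      qed
      then have "(T^^(K-2)) (F m) = 2" using less.prems(2) Fm by simp
      then obtain k where "(F^^k) (F m) = 2"
        using less.IH[of "K-2" "F m"] K0 TT2[OF h] Fm by auto
      then have "(F^^Suc k) m = 2" by (simp add: funpow_Suc_right del: funpow.simps)
      then show ?thesis by blast
    qed
  qed
qed

lemma bwd: "n > 0 \<Longrightarrow> \<exists>j. (T^^j) n > 0 \<and> (T^^j) n mod 3 = 2"
proof (induction "nat n" arbitrary: n rule: less_induct)
  case less
  show ?case
  proof (cases "even n")
    case True
    then have "T n = n div 2" by (simp add: T_def)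
    moreover have "n div 2 > 0" "nat (n div 2) < nat n" using True less.prems by auto
    ultimately obtain j where "(T^^j) (T n) > 0 \<and> (T^^j) (T n) mod 3 = 2"
      using less.hyps by metis
    then have "(T^^Suc j) n > 0 \<and> (T^^Suc j) n mod 3 = 2"
      by (simp add: funpow_Suc_right del: funpow.simps)
    then show ?thesis by blast
  next
    case False
    then have "T n = (3*n+1) div 2" by (simp add: T_def)
    then have "T n > 0 \<and> T n mod 3 = 2" using False less.prems by presburger
    then have "(T^^1) n > 0 \<and> (T^^1) n mod 3 = 2" by simp
    then show ?thesis by blast
  qed
qed

theorem lemma1:
  shows "(\<forall>n::int. n > 0 \<longrightarrow> (\<exists>k. (T ^^ k) n = 1)) \<longleftrightarrow>
         (\<forall>n::int. n > 0 \<longrightarrow> n mod 3 = 2 \<longrightarrow> (\<exists>k. (F ^^ k) n = 2))"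
proof
  assume H: "\<forall>n::int. n > 0 \<longrightarrow> (\<exists>k. (T ^^ k) n = 1)"
  show "\<forall>n::int. n > 0 \<longrightarrow> n mod 3 = 2 \<longrightarrow> (\<exists>k. (F ^^ k) n = 2)"
  proof (intro allI impI)
    fix n :: int assume "n > 0" "n mod 3 = 2"
    then obtain k where "(T^^k) n = 1" using H by blast
    then have "(T^^Suc k) n = 2" by (simp add: T_def)
    then show "\<exists>k. (F ^^ k) n = 2" using fwd \<open>n mod 3 = 2\<close> by blast
  qed
next
  assume H: "\<forall>n::int. n > 0 \<longrightarrow> n mod 3 = 2 \<longrightarrow> (\<exists>k. (F ^^ k) n = 2)"
  show "\<forall>n::int. n > 0 \<longrightarrow> (\<exists>k. (T ^^ k) n = 1)"
  proof (intro allI impI)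
    fix n :: int assume "n > 0"
    then obtain j where j: "(T^^j) n > 0" "(T^^j) n mod 3 = 2" using bwd by blast
    then obtain k where "(F^^k) ((T^^j) n) = 2" using H by blast
    then obtain K where "(T^^K) ((T^^j) n) = 2" using FT_iter by metis
    then have "(T^^(Suc (K+j))) n = 1" by (simp add: funpow_add T_def)
    then show "\<exists>k. (T ^^ k) n = 1" by blast
  qed
qed

end
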